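(* For every $n$-qubit pure state $\ket{\psi}$, $\mathcal{B}(\ket{\psi})\le\frac n4$, with equality for every $1$-uniform state. Moreover, every $2$-uniform $n$-qubit state $\ket{\phi}$ satisfies $\mathcal{B}(\ket{\phi})=\frac n4$ and $\mathrm{Var}_{\phi}\le\mathrm{Var}_{\psi}$ for every $n$-qubit pure state $\ket{\psi}$ with $\mathcal{B}(\ket{\psi})=\frac n4$.
   Context: Parallelized controlled-SWAP test: with $\mathbb{F}^{(i)}$ the swap of the $i$-th qubits of two copies of $\ket{\psi}$, the probability of outcome $\mathbf{z}\in\{0,1\}^n$ is $p_\psi(\mathbf{z})=\mathrm{Tr}\big[\big(\bigotimes_{i=1}^n\tfrac12(\mathbb{1}+(-1)^{z_i}\mathbb{F}^{(i)})\big)(\ket{\psi}\!\bra{\psi})^{\otimes 2}\big]$; each outcome $1$ heralds a Bell pair. The expected number of Bell pairs is $\mathcal{B}(\ket{\psi})=\sum_{\mathbf{z}}w(\mathbf{z})p_\psi(\mathbf{z})$ with $w$ the Hamming weight, and its variance is $\mathrm{Var}_\psi=\sum_{\mathbf{z}}w(\mathbf{z})^2p_\psi(\mathbf{z})-\mathcal{B}(\ket{\psi})^2$. A state is $k$-uniform if all its reduced density matrices on $k$ or fewer qubits are maximally mixed. *)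

theory Defs
  imports Complex_Main
begin

text \<open>Computational basis of n qubits: a basis string x in {0,1}^n is encoded as the
  set of positions i < n with x_i = 1, i.e. an element of Pow {..<n}.\<close>

definition is_state :: "nat \<Rightarrow> (nat set \<Rightarrow> complex) \<Rightarrow> bool" where
  "is_state n psi \<longleftrightarrow> (\<Sum>x\<in>Pow {..<n}. (cmod (psi x))^2) = 1"

text \<open>Single-qubit-pair factor (1/2)(1 + (-1)^z F) acting on the i-th qubits (a,b) of the
  two copies; matrix entry from (a',b') to (a,b). The boolean z means z_i = 1.\<close>

definition swap_factor :: "bool \<Rightarrow> bool \<times> bool \<Rightarrow> bool \<times> bool \<Rightarrow> complex" where
  "swap_factor z ab ab' =
     (1/2) * ((if ab = ab' then 1 else 0)
            + (if z then -1 else 1) * (if ab = (snd ab', fst ab') then 1 else 0))"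

text \<open>Matrix entries of the tensor product over i < n of the factors above, on the
  two-copy space with basis (x,y), x,y in Pow {..<n}. The outcome z is the set of
  positions with z_i = 1.\<close>

definition cswap_op :: "nat \<Rightarrow> nat set \<Rightarrow> nat set \<times> nat set \<Rightarrow> nat set \<times> nat set \<Rightarrow> complex" where
  "cswap_op n z xy xy' =
     (\<Prod>i<n. swap_factor (i \<in> z) (i \<in> fst xy, i \<in> snd xy) (i \<in> fst xy', i \<in> snd xy'))"

text \<open>p_psi(z) = Tr[M_z (|psi><psi|)^{\<otimes>2}] = <psi psi| M_z |psi psi> (a real number).\<close>

definition outcome_prob :: "nat \<Rightarrow> (nat set \<Rightarrow> complex) \<Rightarrow> nat set \<Rightarrow> real" where
  "outcome_prob n psi z = Re (\<Sum>x\<in>Pow {..<n}. \<Sum>y\<in>Pow {..<n}. \<Sum>x'\<in>Pow {..<n}. \<Sum>y'\<in>Pow {..<n}.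
       cnj (psi x * psi y) * cswap_op n z (x, y) (x', y') * (psi x' * psi y'))"

text \<open>Expected number of Bell pairs; Hamming weight of z is card z.\<close>

definition bell_exp :: "nat \<Rightarrow> (nat set \<Rightarrow> complex) \<Rightarrow> real" where
  "bell_exp n psi = (\<Sum>z\<in>Pow {..<n}. real (card z) * outcome_prob n psi z)"

definition bell_var :: "nat \<Rightarrow> (nat set \<Rightarrow> complex) \<Rightarrow> real" where
  "bell_var n psi = (\<Sum>z\<in>Pow {..<n}. (real (card z))^2 * outcome_prob n psi z) - (bell_exp n psi)^2"

definition reduced_dm :: "nat \<Rightarrow> (nat set \<Rightarrow> complex) \<Rightarrow> nat set \<Rightarrow> nat set \<Rightarrow> nat set \<Rightarrow> complex" where
  "reduced_dm n psi A a a' = (\<Sum>b\<in>Pow ({..<n} - A). psi (a \<union> b) * cnj (psi (a' \<union> b)))"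

definition k_uniform :: "nat \<Rightarrow> nat \<Rightarrow> (nat set \<Rightarrow> complex) \<Rightarrow> bool" where
  "k_uniform n k psi \<longleftrightarrow>
     (\<forall>A. A \<subseteq> {..<n} \<and> card A \<le> k \<longrightarrow>
        (\<forall>a a'. a \<subseteq> A \<and> a' \<subseteq> A \<longrightarrow>
           reduced_dm n psi A a a' = (if a = a' then 1 / 2 ^ card A else 0)))"

end

theory Submission imports Defs begin

lemma sum_prod_Pow:
  fixes g :: "nat \<Rightarrow> bool \<Rightarrow> complex"
  assumes "finite A"
  shows "(\<Sum>z\<in>Pow A. \<Prod>i\<in>A. g i (i \<in> z)) = (\<Prod>i\<in>A. g i True + g i False)"
proof -
  have "(\<Prod>i\<in>A. g i True + g i False) = (\<Sum>X\<in>Pow A. (\<Prod>x\<in>X. g x True) * (\<Prod>x\<in>A-X. g x False))"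
    by (rule prod_add[OF assms])
  also have "\<dots> = (\<Sum>z\<in>Pow A. \<Prod>i\<in>A. g i (i \<in> z))"
  proof (rule sum.cong[OF refl])
    fix X assume X: "X \<in> Pow A"
    have "(\<Prod>i\<in>A. g i (i \<in> X)) = (\<Prod>i\<in>A. if i \<in> X then g i True else g i False)"
      by (rule prod.cong) auto
    also have "\<dots> = (\<Prod>x\<in>A \<inter> {x. x \<in> X}. g x True) * (\<Prod>x\<in>A \<inter> - {x. x \<in> X}. g x False)"
      by (rule prod.If_cases[OF assms])
    also have "A \<inter> {x. x \<in> X} = X" using X by auto
    also have "A \<inter> - {x. x \<in> X} = A - X" by auto
    finally show "(\<Prod>x\<in>X. g x True) * (\<Prod>x\<in>A-X. g x False) = (\<Prod>i\<in>A. g i (i \<in> X))" by simp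
  qed
  finally show ?thesis by simp
qed

definition dl :: "nat set \<Rightarrow> nat set \<Rightarrow> nat set \<Rightarrow> nat set \<Rightarrow> nat \<Rightarrow> complex" where
  "dl x y x' y' k = (if (k \<in> x \<longleftrightarrow> k \<in> x') \<and> (k \<in> y \<longleftrightarrow> k \<in> y') then 1 else 0)"
definition sg :: "nat set \<Rightarrow> nat set \<Rightarrow> nat set \<Rightarrow> nat set \<Rightarrow> nat \<Rightarrow> complex" where
  "sg x y x' y' k = (if (k \<in> x \<longleftrightarrow> k \<in> y') \<and> (k \<in> y \<longleftrightarrow> k \<in> x') then 1 else 0)"

lemma sf_True: "swap_factor True (k \<in> x, k \<in> y) (k \<in> x', k \<in> y') = (dl x y x' y' k - sg x y x' y' k) / 2"
  by (cases "k \<in> x"; cases "k \<in> y"; cases "k \<in> x'"; cases "k \<in> y'") (simp_all add: swap_factor_def dl_def sg_def)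

lemma sf_False: "swap_factor False (k \<in> x, k \<in> y) (k \<in> x', k \<in> y') = (dl x y x' y' k + sg x y x' y' k) / 2"
  by (cases "k \<in> x"; cases "k \<in> y"; cases "k \<in> x'"; cases "k \<in> y'") (simp_all add: swap_factor_def dl_def sg_def)

lemma sf_sum: "swap_factor True (k \<in> x, k \<in> y) (k \<in> x', k \<in> y') + swap_factor False (k \<in> x, k \<in> y) (k \<in> x', k \<in> y') = dl x y x' y' k"
  by (cases "k \<in> x"; cases "k \<in> y"; cases "k \<in> x'"; cases "k \<in> y'") (simp_all add: swap_factor_def dl_def sg_def)

definition Kt :: "nat \<Rightarrow> nat set \<Rightarrow> nat set \<Rightarrow> nat set \<Rightarrow> nat set \<Rightarrow> nat set \<Rightarrow> complex" where
  "Kt n T x y x' y' = (\<Sum>z\<in>Pow {..<n}. if T \<subseteq> z then cswap_op n z (x, y) (x', y') else 0)"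

lemma Kt_prod:
  assumes "T \<subseteq> {..<n}"
  shows "Kt n T x y x' y' = (\<Prod>k<n. if k \<in> T then (dl x y x' y' k - sg x y x' y' k) / 2 else dl x y x' y' k)"
proof -
  define g where "g k b = (if k \<in> T \<and> \<not> b then 0 else swap_factor b (k \<in> x, k \<in> y) (k \<in> x', k \<in> y'))" for k b
  have "Kt n T x y x' y' = (\<Sum>z\<in>Pow {..<n}. \<Prod>k\<in>{..<n}. g k (k \<in> z))"
    unfolding Kt_def
  proof (rule sum.cong[OF refl])
    fix z assume z: "z \<in> Pow {..<n}"
    show "(if T \<subseteq> z then cswap_op n z (x, y) (x', y') else 0) = (\<Prod>k\<in>{..<n}. g k (k \<in> z))"
    proof (cases "T \<subseteq> z")
      case True
      have "(\<Prod>k\<in>{..<n}. g k (k \<in> z)) = cswap_op n z (x, y) (x', y')"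
        unfolding cswap_op_def g_def using True by (intro prod.cong) auto
      then show ?thesis using True by simp
    next
      case False
      then obtain k where "k \<in> T" "k \<notin> z" by auto
      moreover have "k \<in> {..<n}" using assms \<open>k \<in> T\<close> by auto
      ultimately show ?thesis using False by (auto simp: g_def intro!: prod_zero)
    qed
  qed
  also have "\<dots> = (\<Prod>k\<in>{..<n}. g k True + g k False)" by (rule sum_prod_Pow) simp
  also have "\<dots> = (\<Prod>k<n. if k \<in> T then (dl x y x' y' k - sg x y x' y' k) / 2 else dl x y x' y' k)"
    by (rule prod.cong[OF refl]) (auto simp: g_def sf_True sf_False field_simps)
  finally show ?thesis .
qed

definition ES :: "nat \<Rightarrow> nat set \<Rightarrow> nat set \<Rightarrow> nat set \<Rightarrow> nat set \<Rightarrow> nat set \<Rightarrow> complex" where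
  "ES n S x y x' y' = (\<Prod>k<n. if k \<in> S then sg x y x' y' k else dl x y x' y' k)"

definition sx :: "nat set \<Rightarrow> nat set \<Rightarrow> nat set \<Rightarrow> nat set" where
  "sx S x y = (x - S) \<union> (y \<inter> S)"

lemma prod_ind:
  assumes "finite A"
  shows "(\<Prod>k\<in>A. (if P k then 1 else 0 :: complex)) = (if \<forall>k\<in>A. P k then 1 else 0)"
proof (cases "\<forall>k\<in>A. P k")
  case True
  then show ?thesis by simp
next
  case False
  then obtain k where "k \<in> A" "\<not> P k" by auto
  then show ?thesis using False assms by (auto intro!: prod_zero)
qed

lemma ES_eq:
  assumes "x \<subseteq> {..<n}" "y \<subseteq> {..<n}" "x' \<subseteq> {..<n}" "y' \<subseteq> {..<n}"
  shows "ES n S x y x' y' = (if x' = sx S x y \<and> y' = sx S y x then 1 else 0)"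
proof -
  define P where "P k = (if k \<in> S then (k \<in> x \<longleftrightarrow> k \<in> y') \<and> (k \<in> y \<longleftrightarrow> k \<in> x')
       else (k \<in> x \<longleftrightarrow> k \<in> x') \<and> (k \<in> y \<longleftrightarrow> k \<in> y'))" for k
  have "ES n S x y x' y' = (\<Prod>k\<in>{..<n}. (if P k then 1 else 0 :: complex))"
    unfolding ES_def by (rule prod.cong) (auto simp: P_def sg_def dl_def)
  also have "\<dots> = (if \<forall>k\<in>{..<n}. P k then 1 else 0)" by (rule prod_ind) simp
  also have "(\<forall>k\<in>{..<n}. P k) \<longleftrightarrow> (x' = sx S x y \<and> y' = sx S y x)"
  proof
    assume H: "\<forall>k\<in>{..<n}. P k"
    have "x' = sx S x y"
    proof (rule set_eqI)
      fix k show "k \<in> x' \<longleftrightarrow> k \<in> sx S x y"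
      proof (cases "k < n")
        case True then show ?thesis using H[rule_format, of k] by (auto simp: P_def sx_def split: if_splits)
      next
        case False then show ?thesis using assms by (auto simp: sx_def)
      qed
    qed
    moreover have "y' = sx S y x"
    proof (rule set_eqI)
      fix k show "k \<in> y' \<longleftrightarrow> k \<in> sx S y x"
      proof (cases "k < n")
        case True then show ?thesis using H[rule_format, of k] by (auto simp: P_def sx_def split: if_splits)
      next
        case False then show ?thesis using assms by (auto simp: sx_def)
      qed
    qed
    ultimately show "x' = sx S x y \<and> y' = sx S y x" ..
  next
    assume "x' = sx S x y \<and> y' = sx S y x"
    then show "\<forall>k\<in>{..<n}. P k" by (auto simp: P_def sx_def)
  qed
  finally show ?thesis .
qed

lemma sx_sub: "x \<subseteq> U \<Longrightarrow> y \<subseteq> U \<Longrightarrow> sx S x y \<subseteq> U"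
  unfolding sx_def by auto

lemma collapse:
  assumes "x \<in> Pow {..<n}" "y \<in> Pow {..<n}"
  shows "(\<Sum>x'\<in>Pow {..<n}. \<Sum>y'\<in>Pow {..<n}. c * ES n S x y x' y' * F x' y') = c * F (sx S x y) (sx S y x)"
proof -
  have "(\<Sum>x'\<in>Pow {..<n}. \<Sum>y'\<in>Pow {..<n}. c * ES n S x y x' y' * F x' y')
      = (\<Sum>x'\<in>Pow {..<n}. \<Sum>y'\<in>Pow {..<n}. if x' = sx S x y \<and> y' = sx S y x then c * F x' y' else 0)"
    using assms by (intro sum.cong refl) (auto simp: ES_eq)
  also have "\<dots> = (\<Sum>x'\<in>Pow {..<n}. if x' = sx S x y then c * F x' (sx S y x) else 0)"
  proof (rule sum.cong[OF refl])
    fix x' assume "x' \<in> Pow {..<n}"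
    have "sx S y x \<in> Pow {..<n}" using assms sx_sub by auto
    then show "(\<Sum>y'\<in>Pow {..<n}. if x' = sx S x y \<and> y' = sx S y x then c * F x' y' else 0)
        = (if x' = sx S x y then c * F x' (sx S y x) else 0)"
      by (cases "x' = sx S x y") (simp_all add: sum.delta)
  qed
  also have "\<dots> = c * F (sx S x y) (sx S y x)"
    using assms sx_sub[of x "{..<n}" y S] by (simp add: sum.delta)
  finally show ?thesis .
qed

lemma prod_two:
  assumes "finite A" "i \<in> A" "j \<in> A" "i \<noteq> j"
  shows "prod f A = f i * f j * prod f (A - {i} - {j})"
proof -
  have "prod f A = f i * prod f (A - {i})" by (rule prod.remove[OF assms(1,2)])
  also have "prod f (A - {i}) = f j * prod f (A - {i} - {j})"
    using assms by (intro prod.remove) auto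
  finally show ?thesis by (simp add: mult.assoc)
qed

lemma Kt_single:
  assumes "i < n"
  shows "Kt n {i} x y x' y' = (ES n {} x y x' y' - ES n {i} x y x' y') / 2"
proof -
  define D where "D = (\<Prod>k\<in>{..<n} - {i}. dl x y x' y' k)"
  have i: "i \<in> {..<n}" using assms by simp
  have "Kt n {i} x y x' y' = (dl x y x' y' i - sg x y x' y' i) / 2 * D"
  proof -
    have "Kt n {i} x y x' y' = (\<Prod>k<n. if k \<in> {i} then (dl x y x' y' k - sg x y x' y' k) / 2 else dl x y x' y' k)"
      by (rule Kt_prod) (use assms in auto)
    then show ?thesis unfolding D_def
      by (subst (asm) prod.remove[OF _ i]) (auto intro!: prod.cong)
  qed
  moreover have "ES n {} x y x' y' = dl x y x' y' i * D"
    unfolding ES_def D_def by (subst prod.remove[OF _ i]) auto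
  moreover have "ES n {i} x y x' y' = sg x y x' y' i * D"
    unfolding ES_def D_def by (subst prod.remove[OF _ i]) (auto intro!: prod.cong)
  ultimately show ?thesis by (simp add: field_simps)
qed

lemma Kt_pair:
  assumes "i < n" "j < n" "i \<noteq> j"
  shows "Kt n {i, j} x y x' y' = (ES n {} x y x' y' - ES n {i} x y x' y' - ES n {j} x y x' y' + ES n {i, j} x y x' y') / 4"
proof -
  define D where "D = (\<Prod>k\<in>{..<n} - {i} - {j}. dl x y x' y' k)"
  have ij: "finite {..<n}" "i \<in> {..<n}" "j \<in> {..<n}" "i \<noteq> j" using assms by auto
  have "Kt n {i, j} x y x' y' = (dl x y x' y' i - sg x y x' y' i) / 2 * ((dl x y x' y' j - sg x y x' y' j) / 2) * D"
  proof -
    have "Kt n {i, j} x y x' y' = (\<Prod>k<n. if k \<in> {i, j} then (dl x y x' y' k - sg x y x' y' k) / 2 else dl x y x' y' k)"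
      by (rule Kt_prod) (use assms in auto)
    then show ?thesis using assms unfolding D_def
      by (subst (asm) prod_two[OF ij]) (auto intro!: prod.cong)
  qed
  moreover have "ES n {} x y x' y' = dl x y x' y' i * dl x y x' y' j * D"
    unfolding ES_def D_def by (subst prod_two[OF ij]) auto
  moreover have "ES n {i} x y x' y' = sg x y x' y' i * dl x y x' y' j * D"
    using assms unfolding ES_def D_def by (subst prod_two[OF ij]) (auto intro!: prod.cong)
  moreover have "ES n {j} x y x' y' = dl x y x' y' i * sg x y x' y' j * D"
    using assms unfolding ES_def D_def by (subst prod_two[OF ij]) (auto intro!: prod.cong)
  moreover have "ES n {i, j} x y x' y' = sg x y x' y' i * sg x y x' y' j * D"
    using assms unfolding ES_def D_def by (subst prod_two[OF ij]) (auto intro!: prod.cong)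
  ultimately show ?thesis by (simp add: field_simps)
qed

definition Q :: "nat \<Rightarrow> (nat set \<Rightarrow> complex) \<Rightarrow> nat set \<Rightarrow> complex" where
  "Q n psi S = (\<Sum>x\<in>Pow {..<n}. \<Sum>y\<in>Pow {..<n}. cnj (psi x * psi y) * (psi (sx S x y) * psi (sx S y x)))"

definition M :: "nat \<Rightarrow> (nat set \<Rightarrow> complex) \<Rightarrow> nat set \<Rightarrow> real" where
  "M n psi T = (\<Sum>z\<in>Pow {..<n}. if T \<subseteq> z then outcome_prob n psi z else 0)"

definition Pu :: "nat \<Rightarrow> (nat set \<Rightarrow> complex) \<Rightarrow> nat set \<Rightarrow> real" where
  "Pu n psi S = (\<Sum>a\<in>Pow S. \<Sum>a'\<in>Pow S. (cmod (reduced_dm n psi S a a'))^2)"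

lemma swap4:
  "(\<Sum>z\<in>Z. \<Sum>x\<in>A. \<Sum>y\<in>A. \<Sum>x'\<in>A. \<Sum>y'\<in>A. f z x y x' y')
   = (\<Sum>x\<in>A. \<Sum>y\<in>A. \<Sum>x'\<in>A. \<Sum>y'\<in>A. \<Sum>z\<in>Z. f z x y x' y')"
proof -
  have "(\<Sum>z\<in>Z. \<Sum>x\<in>A. \<Sum>y\<in>A. \<Sum>x'\<in>A. \<Sum>y'\<in>A. f z x y x' y')
      = (\<Sum>x\<in>A. \<Sum>z\<in>Z. \<Sum>y\<in>A. \<Sum>x'\<in>A. \<Sum>y'\<in>A. f z x y x' y')" by (rule sum.swap)
  also have "\<dots> = (\<Sum>x\<in>A. \<Sum>y\<in>A. \<Sum>z\<in>Z. \<Sum>x'\<in>A. \<Sum>y'\<in>A. f z x y x' y')"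
    by (rule sum.cong[OF refl], rule sum.swap)
  also have "\<dots> = (\<Sum>x\<in>A. \<Sum>y\<in>A. \<Sum>x'\<in>A. \<Sum>z\<in>Z. \<Sum>y'\<in>A. f z x y x' y')"
    by (rule sum.cong[OF refl], rule sum.cong[OF refl], rule sum.swap)
  also have "\<dots> = (\<Sum>x\<in>A. \<Sum>y\<in>A. \<Sum>x'\<in>A. \<Sum>y'\<in>A. \<Sum>z\<in>Z. f z x y x' y')"
    by (rule sum.cong[OF refl], rule sum.cong[OF refl], rule sum.cong[OF refl], rule sum.swap)
  finally show ?thesis .
qed

lemma M_Kt:
  "M n psi T = Re (\<Sum>x\<in>Pow {..<n}. \<Sum>y\<in>Pow {..<n}. \<Sum>x'\<in>Pow {..<n}. \<Sum>y'\<in>Pow {..<n}.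
      cnj (psi x * psi y) * Kt n T x y x' y' * (psi x' * psi y'))"
proof -
  let ?U = "Pow {..<n}"
  have "M n psi T = Re (\<Sum>z\<in>?U. \<Sum>x\<in>?U. \<Sum>y\<in>?U. \<Sum>x'\<in>?U. \<Sum>y'\<in>?U.
      cnj (psi x * psi y) * (if T \<subseteq> z then cswap_op n z (x, y) (x', y') else 0) * (psi x' * psi y'))"
    unfolding M_def outcome_prob_def Re_sum
    by (rule sum.cong[OF refl]) auto
  also have "\<dots> = Re (\<Sum>x\<in>?U. \<Sum>y\<in>?U. \<Sum>x'\<in>?U. \<Sum>y'\<in>?U. \<Sum>z\<in>?U.
      cnj (psi x * psi y) * (if T \<subseteq> z then cswap_op n z (x, y) (x', y') else 0) * (psi x' * psi y'))"
    by (subst swap4) (rule refl)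
  also have "\<dots> = Re (\<Sum>x\<in>?U. \<Sum>y\<in>?U. \<Sum>x'\<in>?U. \<Sum>y'\<in>?U.
      cnj (psi x * psi y) * Kt n T x y x' y' * (psi x' * psi y'))"
    unfolding Kt_def by (simp add: sum_distrib_left sum_distrib_right)
  finally show ?thesis .
qed

lemma L_ES:
  "(\<Sum>x\<in>Pow {..<n}. \<Sum>y\<in>Pow {..<n}. \<Sum>x'\<in>Pow {..<n}. \<Sum>y'\<in>Pow {..<n}.
      cnj (psi x * psi y) * ES n S x y x' y' * (psi x' * psi y')) = Q n psi S"
  unfolding Q_def by (intro sum.cong refl collapse)

lemma M_single:
  assumes "i < n"
  shows "M n psi {i} = Re ((Q n psi {} - Q n psi {i}) / 2)"
proof -
  let ?U = "Pow {..<n}"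
  have "M n psi {i} = Re (\<Sum>x\<in>?U. \<Sum>y\<in>?U. \<Sum>x'\<in>?U. \<Sum>y'\<in>?U.
      (cnj (psi x * psi y) * ES n {} x y x' y' * (psi x' * psi y')
     - cnj (psi x * psi y) * ES n {i} x y x' y' * (psi x' * psi y')) / 2)"
    unfolding M_Kt Kt_single[OF assms] by (simp add: field_simps)
  also have "\<dots> = Re ((Q n psi {} - Q n psi {i}) / 2)"
    unfolding L_ES[symmetric] by (simp add: sum_subtractf sum.distrib sum_divide_distrib diff_divide_distrib add_divide_distrib)
  finally show ?thesis .
qed

lemma M_pair:
  assumes "i < n" "j < n" "i \<noteq> j"
  shows "M n psi {i, j} = Re ((Q n psi {} - Q n psi {i} - Q n psi {j} + Q n psi {i, j}) / 4)"
proof -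
  let ?U = "Pow {..<n}"
  have "M n psi {i, j} = Re (\<Sum>x\<in>?U. \<Sum>y\<in>?U. \<Sum>x'\<in>?U. \<Sum>y'\<in>?U.
      (cnj (psi x * psi y) * ES n {} x y x' y' * (psi x' * psi y')
     - cnj (psi x * psi y) * ES n {i} x y x' y' * (psi x' * psi y')
     - cnj (psi x * psi y) * ES n {j} x y x' y' * (psi x' * psi y')
     + cnj (psi x * psi y) * ES n {i, j} x y x' y' * (psi x' * psi y')) / 4)"
    unfolding M_Kt Kt_pair[OF assms] by (simp add: field_simps)
  also have "\<dots> = Re ((Q n psi {} - Q n psi {i} - Q n psi {j} + Q n psi {i, j}) / 4)"
    unfolding L_ES[symmetric] by (simp add: sum_subtractf sum.distrib sum_divide_distrib diff_divide_distrib add_divide_distrib)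
  finally show ?thesis .
qed

lemma Q_empty:
  assumes "is_state n psi"
  shows "Q n psi {} = 1"
proof -
  have "Q n psi {} = (\<Sum>x\<in>Pow {..<n}. \<Sum>y\<in>Pow {..<n}. of_real ((cmod (psi x))^2) * of_real ((cmod (psi y))^2))"
    unfolding Q_def sx_def by (intro sum.cong refl) (simp add: complex_norm_square mult_ac del: of_real_power)
  also have "\<dots> = of_real (\<Sum>x\<in>Pow {..<n}. (cmod (psi x))^2) * of_real (\<Sum>x\<in>Pow {..<n}. (cmod (psi x))^2)"
    by (simp add: sum_product)
  also have "\<dots> = 1" using assms unfolding is_state_def by simp
  finally show ?thesis .
qed

lemma split_Pow:
  assumes "S \<subseteq> U" "finite U"
  shows "(\<Sum>x\<in>Pow U. g x) = (\<Sum>a\<in>Pow S. \<Sum>b\<in>Pow (U - S). g (a \<union> b))"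
proof -
  have "(\<Sum>a\<in>Pow S. \<Sum>b\<in>Pow (U - S). g (a \<union> b)) = (\<Sum>p\<in>Pow S \<times> Pow (U - S). g (fst p \<union> snd p))"
    by (simp add: sum.cartesian_product case_prod_beta)
  also have "\<dots> = (\<Sum>x\<in>Pow U. g x)"
  proof (rule sum.reindex_bij_betw)
    show "bij_betw (\<lambda>p. fst p \<union> snd p) (Pow S \<times> Pow (U - S)) (Pow U)"
      by (rule bij_betw_byWitness[where f' = "\<lambda>x. (x \<inter> S, x - S)"]) (use assms in auto)
  qed
  finally show ?thesis by simp
qed

lemma Q_Pu:
  assumes "S \<subseteq> {..<n}"
  shows "Q n psi S = of_real (Pu n psi S)"
proof -
  let ?U = "{..<n}"
  define T where "T x y = cnj (psi x * psi y) * (psi (sx S x y) * psi (sx S y x))" for x y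
  have "Q n psi S = (\<Sum>x\<in>Pow ?U. \<Sum>y\<in>Pow ?U. T x y)" unfolding Q_def T_def ..
  also have "\<dots> = (\<Sum>a\<in>Pow S. \<Sum>b\<in>Pow (?U - S). \<Sum>y\<in>Pow ?U. T (a \<union> b) y)"
    by (rule split_Pow[OF assms]) simp
  also have "\<dots> = (\<Sum>a\<in>Pow S. \<Sum>b\<in>Pow (?U - S). \<Sum>a'\<in>Pow S. \<Sum>b'\<in>Pow (?U - S). T (a \<union> b) (a' \<union> b'))"
    by (intro sum.cong refl split_Pow[OF assms]) simp
  also have "\<dots> = (\<Sum>a\<in>Pow S. \<Sum>b\<in>Pow (?U - S). \<Sum>a'\<in>Pow S. \<Sum>b'\<in>Pow (?U - S).
       cnj (psi (a \<union> b)) * psi (a' \<union> b) * psi (a \<union> b') * cnj (psi (a' \<union> b')))"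
  proof (intro sum.cong refl)
    fix a b a' b' assume "a \<in> Pow S" "b \<in> Pow (?U - S)" "a' \<in> Pow S" "b' \<in> Pow (?U - S)"
    then have "sx S (a \<union> b) (a' \<union> b') = a' \<union> b" "sx S (a' \<union> b') (a \<union> b) = a \<union> b'"
      unfolding sx_def by auto
    then show "T (a \<union> b) (a' \<union> b') = cnj (psi (a \<union> b)) * psi (a' \<union> b) * psi (a \<union> b') * cnj (psi (a' \<union> b'))"
      unfolding T_def by (simp add: mult_ac)
  qed
  also have "\<dots> = (\<Sum>a\<in>Pow S. \<Sum>a'\<in>Pow S. \<Sum>b\<in>Pow (?U - S). \<Sum>b'\<in>Pow (?U - S).
       cnj (psi (a \<union> b)) * psi (a' \<union> b) * psi (a \<union> b') * cnj (psi (a' \<union> b')))"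
    by (rule sum.cong[OF refl], rule sum.swap)
  also have "\<dots> = (\<Sum>a\<in>Pow S. \<Sum>a'\<in>Pow S. of_real ((cmod (reduced_dm n psi S a a'))^2))"
  proof (intro sum.cong refl)
    fix a a'
    have "of_real ((cmod (reduced_dm n psi S a a'))^2) = cnj (reduced_dm n psi S a a') * reduced_dm n psi S a a'"
      by (simp add: complex_norm_square mult.commute del: of_real_power)
    also have "\<dots> = (\<Sum>b\<in>Pow (?U - S). cnj (psi (a \<union> b)) * psi (a' \<union> b)) *
                    (\<Sum>b'\<in>Pow (?U - S). psi (a \<union> b') * cnj (psi (a' \<union> b')))"
      unfolding reduced_dm_def by (simp add: cnj_sum)
    also have "\<dots> = (\<Sum>b\<in>Pow (?U - S). \<Sum>b'\<in>Pow (?U - S).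
       cnj (psi (a \<union> b)) * psi (a' \<union> b) * psi (a \<union> b') * cnj (psi (a' \<union> b')))"
      by (simp add: sum_product mult_ac)
    finally show "(\<Sum>b\<in>Pow (?U - S). \<Sum>b'\<in>Pow (?U - S).
       cnj (psi (a \<union> b)) * psi (a' \<union> b) * psi (a \<union> b') * cnj (psi (a' \<union> b'))) =
       of_real ((cmod (reduced_dm n psi S a a'))^2)" by simp
  qed
  also have "\<dots> = of_real (Pu n psi S)" unfolding Pu_def by simp
  finally show ?thesis .
qed

lemma Pu_lower:
  assumes "S \<subseteq> {..<n}" "is_state n psi"
  shows "Pu n psi S \<ge> 1 / 2 ^ card S"
proof -
  let ?U = "{..<n}"
  have fS: "finite S" using assms(1) finite_subset by blast
  define r where "r a = (\<Sum>b\<in>Pow (?U - S). (cmod (psi (a \<union> b)))^2)" for a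
  define N where "N = real (card (Pow S))"
  have N: "N = 2 ^ card S" unfolding N_def using fS by (simp add: card_Pow)
  have Npos: "N > 0" using N by simp
  have rho: "reduced_dm n psi S a a = of_real (r a)" for a
    unfolding reduced_dm_def r_def by (simp add: complex_norm_square del: of_real_power)
  have sr: "(\<Sum>a\<in>Pow S. r a) = 1"
  proof -
    have "(\<Sum>x\<in>Pow ?U. (cmod (psi x))^2) = (\<Sum>a\<in>Pow S. \<Sum>b\<in>Pow (?U - S). (cmod (psi (a \<union> b)))^2)"
      by (rule split_Pow[OF assms(1)]) simp
    then show ?thesis using assms(2) unfolding r_def is_state_def by simp
  qed
  have "0 \<le> (\<Sum>a\<in>Pow S. (r a - 1 / N)^2)" by (simp add: sum_nonneg)
  also have "\<dots> = (\<Sum>a\<in>Pow S. (r a)^2) - 2 / N * (\<Sum>a\<in>Pow S. r a) + N * (1 / N)^2"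
    by (simp add: power2_diff sum_subtractf sum.distrib sum_distrib_left N_def)
  also have "\<dots> = (\<Sum>a\<in>Pow S. (r a)^2) - 1 / N"
    using Npos by (simp add: sr power2_eq_square field_simps)
  finally have c1: "1 / N \<le> (\<Sum>a\<in>Pow S. (r a)^2)" by simp
  have "(\<Sum>a\<in>Pow S. (r a)^2) = (\<Sum>a\<in>Pow S. (cmod (reduced_dm n psi S a a))^2)"
    by (simp add: rho)
  also have "\<dots> \<le> Pu n psi S"
    unfolding Pu_def
  proof (rule sum_mono)
    fix a assume "a \<in> Pow S"
    then show "(cmod (reduced_dm n psi S a a))^2 \<le> (\<Sum>a'\<in>Pow S. (cmod (reduced_dm n psi S a a'))^2)"
      using fS by (intro member_le_sum) auto
  qed
  finally show ?thesis using c1 N by simp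
qed

lemma Pu_unif:
  assumes "S \<subseteq> {..<n}"
    and "\<forall>a a'. a \<subseteq> S \<and> a' \<subseteq> S \<longrightarrow> reduced_dm n psi S a a' = (if a = a' then 1 / 2 ^ card S else 0)"
  shows "Pu n psi S = 1 / 2 ^ card S"
proof -
  have fS: "finite S" using assms(1) finite_subset by blast
  have "Pu n psi S = (\<Sum>a\<in>Pow S. \<Sum>a'\<in>Pow S. (cmod (if a = a' then 1 / 2 ^ card S else 0 :: complex))^2)"
    unfolding Pu_def using assms(2) by (intro sum.cong refl) auto
  also have "\<dots> = (\<Sum>a\<in>Pow S. (1 / 2 ^ card S)^2)"
  proof (rule sum.cong[OF refl])
    fix a assume a: "a \<in> Pow S"
    have "(\<Sum>a'\<in>Pow S. (cmod (if a = a' then 1 / 2 ^ card S else 0 :: complex))^2)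
        = (\<Sum>a'\<in>Pow S. if a = a' then (1 / 2 ^ card S :: real)^2 else 0)"
      by (intro sum.cong refl) (simp add: norm_divide norm_power)
    also have "\<dots> = (1 / 2 ^ card S)^2" using a fS by (subst sum.delta') auto
    finally show "(\<Sum>a'\<in>Pow S. (cmod (if a = a' then 1 / 2 ^ card S else 0 :: complex))^2) = (1 / 2 ^ card S)^2" .
  qed
  also have "\<dots> = 2 ^ card S * (1 / 2 ^ card S)^2" using fS by (simp add: card_Pow)
  also have "\<dots> = 1 / 2 ^ card S" by (simp add: power2_eq_square)
  finally show ?thesis .
qed

lemma M1:
  assumes "is_state n psi" "i < n"
  shows "M n psi {i} = (1 - Pu n psi {i}) / 2"
proof -
  have "Q n psi {i} = of_real (Pu n psi {i})" by (rule Q_Pu) (use assms in auto)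
  then show ?thesis using M_single[OF assms(2)] Q_empty[OF assms(1)] by simp
qed

lemma M2:
  assumes "is_state n psi" "i < n" "j < n" "i \<noteq> j"
  shows "M n psi {i, j} = (1 - Pu n psi {i} - Pu n psi {j} + Pu n psi {i, j}) / 4"
proof -
  have "Q n psi {i} = of_real (Pu n psi {i})" by (rule Q_Pu) (use assms in auto)
  moreover have "Q n psi {j} = of_real (Pu n psi {j})" by (rule Q_Pu) (use assms in auto)
  moreover have "Q n psi {i, j} = of_real (Pu n psi {i, j})" by (rule Q_Pu) (use assms in auto)
  ultimately show ?thesis using M_pair[OF assms(2-4)] Q_empty[OF assms(1)] by simp
qed

lemma card_ind:
  assumes "z \<subseteq> {..<(n::nat)}"
  shows "real (card z) = (\<Sum>i<n. if i \<in> z then 1 else 0)"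
proof -
  have "(\<Sum>i<n. if i \<in> z then 1 else 0) = (\<Sum>i\<in>{..<n} \<inter> z. (1::real))"
    using sum.inter_restrict[of "{..<n}" "\<lambda>_. (1::real)" z] by simp
  also have "{..<n} \<inter> z = z" using assms by auto
  finally show ?thesis by simp
qed

lemma bell_exp_M: "bell_exp n psi = (\<Sum>i<n. M n psi {i})"
proof -
  have "bell_exp n psi = (\<Sum>z\<in>Pow {..<n}. \<Sum>i<n. if {i} \<subseteq> z then outcome_prob n psi z else 0)"
    unfolding bell_exp_def
  proof (rule sum.cong[OF refl])
    fix z assume "z \<in> Pow {..<n}"
    then have "real (card z) * outcome_prob n psi z = (\<Sum>i<n. (if i \<in> z then 1 else 0) * outcome_prob n psi z)"
      by (simp add: card_ind sum_distrib_right)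
    also have "\<dots> = (\<Sum>i<n. if {i} \<subseteq> z then outcome_prob n psi z else 0)"
      by (intro sum.cong refl) auto
    finally show "real (card z) * outcome_prob n psi z = (\<Sum>i<n. if {i} \<subseteq> z then outcome_prob n psi z else 0)" .
  qed
  also have "\<dots> = (\<Sum>i<n. M n psi {i})" unfolding M_def by (rule sum.swap)
  finally show ?thesis .
qed

lemma second_M: "(\<Sum>z\<in>Pow {..<n}. (real (card z))^2 * outcome_prob n psi z) = (\<Sum>i<n. \<Sum>j<n. M n psi {i, j})"
proof -
  have "(\<Sum>z\<in>Pow {..<n}. (real (card z))^2 * outcome_prob n psi z)
      = (\<Sum>z\<in>Pow {..<n}. \<Sum>i<n. \<Sum>j<n. if {i, j} \<subseteq> z then outcome_prob n psi z else 0)"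
  proof (rule sum.cong[OF refl])
    fix z assume "z \<in> Pow {..<n}"
    then have zs: "z \<subseteq> {..<n}" by simp
    have "(real (card z))^2 * outcome_prob n psi z
       = (\<Sum>i<n. \<Sum>j<n. (if i \<in> z then 1 else 0) * (if j \<in> z then 1 else 0)) * outcome_prob n psi z"
      unfolding card_ind[OF zs] power2_eq_square sum_product ..
    also have "\<dots> = (\<Sum>i<n. \<Sum>j<n. (if i \<in> z then 1 else 0) * (if j \<in> z then 1 else 0) * outcome_prob n psi z)"
      unfolding sum_distrib_right ..
    finally have "(real (card z))^2 * outcome_prob n psi z
       = (\<Sum>i<n. \<Sum>j<n. (if i \<in> z then 1 else 0) * (if j \<in> z then 1 else 0) * outcome_prob n psi z)" .
    also have "\<dots> = (\<Sum>i<n. \<Sum>j<n. if {i, j} \<subseteq> z then outcome_prob n psi z else 0)"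
      by (intro sum.cong refl) auto
    finally show "(real (card z))^2 * outcome_prob n psi z = (\<Sum>i<n. \<Sum>j<n. if {i, j} \<subseteq> z then outcome_prob n psi z else 0)" .
  qed
  also have "\<dots> = (\<Sum>i<n. \<Sum>z\<in>Pow {..<n}. \<Sum>j<n. if {i, j} \<subseteq> z then outcome_prob n psi z else 0)"
    by (rule sum.swap)
  also have "\<dots> = (\<Sum>i<n. \<Sum>j<n. M n psi {i, j})" unfolding M_def
    by (rule sum.cong[OF refl], rule sum.swap)
  finally show ?thesis .
qed

lemma unif_Pu:
  assumes "k_uniform n k psi" "S \<subseteq> {..<n}" "card S \<le> k"
  shows "Pu n psi S = 1 / 2 ^ card S"
  using assms unfolding k_uniform_def by (intro Pu_unif) auto

lemma M1_le: "is_state n psi \<Longrightarrow> i < n \<Longrightarrow> M n psi {i} \<le> 1 / 4"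
  using M1[of n psi i] Pu_lower[of "{i}" n psi] by simp

theorem corollary3:
  fixes n :: nat
  shows "(\<forall>psi. is_state n psi \<longrightarrow> bell_exp n psi \<le> real n / 4)
       \<and> (\<forall>psi. is_state n psi \<and> k_uniform n 1 psi \<longrightarrow> bell_exp n psi = real n / 4)
       \<and> (\<forall>phi. is_state n phi \<and> k_uniform n 2 phi \<longrightarrow>
            bell_exp n phi = real n / 4 \<and>
            (\<forall>psi. is_state n psi \<and> bell_exp n psi = real n / 4 \<longrightarrow>
                   bell_var n phi \<le> bell_var n psi))"
proof (intro conjI allI impI)
  fix psi assume st: "is_state n psi"
  have "bell_exp n psi \<le> (\<Sum>i<n. 1 / 4)" unfolding bell_exp_M
    by (rule sum_mono) (use M1_le[OF st] in auto)
  then show "bell_exp n psi \<le> real n / 4" by simp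
next
  fix psi assume H: "is_state n psi \<and> k_uniform n 1 psi"
  have "bell_exp n psi = (\<Sum>i<n. 1 / 4)" unfolding bell_exp_M
  proof (rule sum.cong[OF refl])
    fix i assume "i \<in> {..<n}"
    then have "Pu n psi {i} = 1 / 2" using unif_Pu[of n 1 psi "{i}"] H by simp
    then show "M n psi {i} = 1 / 4" using M1[of n psi i] H \<open>i \<in> {..<n}\<close> by simp
  qed
  then show "bell_exp n psi = real n / 4" by simp
next
  fix phi assume H: "is_state n phi \<and> k_uniform n 2 phi"
  have P1: "Pu n phi {i} = 1 / 2" if "i < n" for i
    using unif_Pu[of n 2 phi "{i}"] H that by simp
  have P2: "Pu n phi {i, j} = 1 / 4" if "i < n" "j < n" "i \<noteq> j" for i j
    using unif_Pu[of n 2 phi "{i, j}"] H that by simp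
  have M1phi: "M n phi {i} = 1 / 4" if "i < n" for i
    using M1[of n phi i] P1[OF that] H that by simp
  have "bell_exp n phi = (\<Sum>i<n. 1 / 4)"
    unfolding bell_exp_M by (rule sum.cong) (auto simp: M1phi)
  then show Bphi: "bell_exp n phi = real n / 4" by simp
  fix psi assume H2: "is_state n psi \<and> bell_exp n psi = real n / 4"
  have M1psi: "M n psi {i} = 1 / 4" if "i < n" for i
  proof -
    have "(\<Sum>i<n. 1 / 4 - M n psi {i}) = 0"
      using H2 by (simp add: bell_exp_M sum_subtractf)
    moreover have "\<forall>i\<in>{..<n}. 0 \<le> 1 / 4 - M n psi {i}" using M1_le[of n psi] H2 by auto
    ultimately have "\<forall>i\<in>{..<n}. 1 / 4 - M n psi {i} = 0"
      by (subst (asm) sum_nonneg_eq_0_iff) auto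
    then show ?thesis using that by auto
  qed
  have le: "M n phi {i, j} \<le> M n psi {i, j}" if "i < n" "j < n" for i j
  proof (cases "i = j")
    case True
    then show ?thesis using M1phi[OF that(1)] M1psi[OF that(1)] by simp
  next
    case False
    have a: "Pu n psi {i} = 1 / 2" "Pu n psi {j} = 1 / 2"
      using M1[of n psi i] M1[of n psi j] M1psi that H2 by auto
    have "Pu n psi {i, j} \<ge> 1 / 4"
      using Pu_lower[of "{i, j}" n psi] H2 that False by simp
    then show ?thesis using M2[of n psi i j] M2[of n phi i j] a P1 P2 that False H H2 by simp
  qed
  have "(\<Sum>i<n. \<Sum>j<n. M n phi {i, j}) \<le> (\<Sum>i<n. \<Sum>j<n. M n psi {i, j})"
    by (intro sum_mono) (use le in auto)
  moreover have "bell_exp n phi = bell_exp n psi" using Bphi H2 by simp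
  ultimately show "bell_var n phi \<le> bell_var n psi"
    unfolding bell_var_def second_M by simp
qed

end
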